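(* Let $\mathcal{C}$ be a covering of a finite set $E$. For $x\in E$ let $N(x)=\bigcap\{K\in\mathcal{C}:x\in K\}$, and define $VH:2^E\to 2^E$ by $VH(X)=\bigcup\{N(x):x\in E,\ N(x)\cap X\neq\emptyset\}$. Then $VH$ is the closure operator of some matroid on $E$ if and only if $\{VH(\{x\}):x\in E\}$ forms a partition of $E$.
   Context: A covering of $E$ is a family of nonempty subsets of $E$ with union $E$. "$\{VH(\{x\}):x\in E\}$ forms a partition" means the distinct sets among the $VH(\{x\})$ are pairwise disjoint (their union is $E$ since $x\in VH(\{x\})$). The closure operator of a matroid with rank function $r$ is $cl(X)=\{a\in E:r(X\cup\{a\})=r(X)\}$. *)

theory Defs
  imports Main
begin

definition covering :: "'a set \<Rightarrow> 'a set set \<Rightarrow> bool" where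
  "covering E \<C> \<longleftrightarrow> (\<forall>K\<in>\<C>. K \<noteq> {} \<and> K \<subseteq> E) \<and> \<Union>\<C> = E"

definition Nbh :: "'a set set \<Rightarrow> 'a \<Rightarrow> 'a set" where
  "Nbh \<C> x = \<Inter>{K\<in>\<C>. x \<in> K}"

definition VH :: "'a set \<Rightarrow> 'a set set \<Rightarrow> 'a set \<Rightarrow> 'a set" where
  "VH E \<C> X = \<Union>{Nbh \<C> x | x. x \<in> E \<and> Nbh \<C> x \<inter> X \<noteq> {}}"

definition matroid_rank :: "'a set \<Rightarrow> ('a set \<Rightarrow> nat) \<Rightarrow> bool" where
  "matroid_rank E r \<longleftrightarrow> finite E \<and>
     (\<forall>X. X \<subseteq> E \<longrightarrow> r X \<le> card X) \<and>
     (\<forall>X Y. X \<subseteq> Y \<and> Y \<subseteq> E \<longrightarrow> r X \<le> r Y) \<and>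
     (\<forall>X Y. X \<subseteq> E \<and> Y \<subseteq> E \<longrightarrow> r (X \<union> Y) + r (X \<inter> Y) \<le> r X + r Y)"

definition matroid_cl :: "'a set \<Rightarrow> ('a set \<Rightarrow> nat) \<Rightarrow> 'a set \<Rightarrow> 'a set" where
  "matroid_cl E r X = {a\<in>E. r (X \<union> {a}) = r X}"

definition forms_partition :: "'a set \<Rightarrow> ('a \<Rightarrow> 'a set) \<Rightarrow> bool" where
  "forms_partition E S \<longleftrightarrow> (\<forall>x\<in>E. \<forall>y\<in>E. S x = S y \<or> S x \<inter> S y = {})"

end

theory Submission
  imports Defs
begin

lemma Nbh_self: "x \<in> Nbh C x"
  unfolding Nbh_def by auto

lemma Nbh_sub: assumes "covering E C" "z \<in> E" shows "Nbh C z \<subseteq> E"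
proof -
  from assms obtain K where K: "K \<in> C" "z \<in> K" unfolding covering_def by blast
  then have "Nbh C z \<subseteq> K" unfolding Nbh_def by blast
  moreover have "K \<subseteq> E" using K assms(1) unfolding covering_def by blast
  ultimately show ?thesis by blast
qed

lemma VH_mem: "a \<in> VH E C X \<longleftrightarrow> (\<exists>z\<in>E. a \<in> Nbh C z \<and> Nbh C z \<inter> X \<noteq> {})"
  unfolding VH_def by auto

lemma VH_single: "a \<in> VH E C {x} \<longleftrightarrow> (\<exists>z\<in>E. a \<in> Nbh C z \<and> x \<in> Nbh C z)"
  unfolding VH_mem by auto

lemma VH_union: "a \<in> VH E C X \<longleftrightarrow> (\<exists>x\<in>X. a \<in> VH E C {x})"
  unfolding VH_mem VH_single by auto

lemma VH_sym: "a \<in> VH E C {x} \<Longrightarrow> x \<in> VH E C {a}"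
  unfolding VH_single by blast

lemma VH_refl: "x \<in> E \<Longrightarrow> x \<in> VH E C {x}"
  unfolding VH_single using Nbh_self[of x C] by (intro bexI[of _ x]) simp_all

lemma VH_subE: assumes "covering E C" "a \<in> VH E C X" shows "a \<in> E"
proof -
  obtain z where "z \<in> E" "a \<in> Nbh C z" using assms(2) unfolding VH_mem by blast
  then show ?thesis using Nbh_sub[OF assms(1)] by blast
qed

lemma cl_trans:
  assumes m: "matroid_rank E r" and x: "x \<in> E" and y: "y \<in> E" and a: "a \<in> E"
    and h1: "r ({x} \<union> {a}) = r {x}" and h2: "r ({y} \<union> {x}) = r {y}"
  shows "r ({y} \<union> {a}) = r {y}"
proof -
  from m have sub: "\<And>X Y. X \<subseteq> E \<Longrightarrow> Y \<subseteq> E \<Longrightarrow> r (X \<union> Y) + r (X \<inter> Y) \<le> r X + r Y"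
    and mono: "\<And>X Y. X \<subseteq> Y \<Longrightarrow> Y \<subseteq> E \<Longrightarrow> r X \<le> r Y"
    unfolding matroid_rank_def by blast+
  have "r ({y,x} \<union> {x,a}) + r ({y,x} \<inter> {x,a}) \<le> r {y,x} + r {x,a}"
    using sub[of "{y,x}" "{x,a}"] x y a by auto
  moreover have "r {x} \<le> r ({y,x} \<inter> {x,a})" using mono[of "{x}" "{y,x} \<inter> {x,a}"] x y a by auto
  moreover have "r {y,x} = r {y}" using h2 by (simp add: insert_commute)
  moreover have "r {x,a} = r {x}" using h1 by (simp add: insert_commute)
  ultimately have "r ({y,x} \<union> {x,a}) \<le> r {y}" by linarith
  moreover have "r {y,a} \<le> r ({y,x} \<union> {x,a})" using mono[of "{y,a}" "{y,x} \<union> {x,a}"] x y a by auto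
  moreover have "r {y} \<le> r {y,a}" using mono[of "{y}" "{y,a}"] y a by auto
  ultimately have "r {y,a} = r {y}" by linarith
  then show ?thesis by (simp add: insert_commute)
qed

theorem theorem11:
  fixes E :: "'a set" and \<C> :: "'a set set"
  assumes "finite E" and "covering E \<C>"
  shows "(\<exists>r. matroid_rank E r \<and> (\<forall>X. X \<subseteq> E \<longrightarrow> VH E \<C> X = matroid_cl E r X))
         \<longleftrightarrow> forms_partition E (\<lambda>x. VH E \<C> {x})"
proof
  assume "\<exists>r. matroid_rank E r \<and> (\<forall>X. X \<subseteq> E \<longrightarrow> VH E \<C> X = matroid_cl E r X)"
  then obtain r where m: "matroid_rank E r" and cl: "\<And>X. X \<subseteq> E \<Longrightarrow> VH E \<C> X = matroid_cl E r X"
    by blast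
  have c: "a \<in> VH E \<C> {x} \<longleftrightarrow> a \<in> E \<and> r ({x} \<union> {a}) = r {x}" if "x \<in> E" for a x
  proof -
    have "VH E \<C> {x} = matroid_cl E r {x}" using cl that by blast
    then show ?thesis unfolding matroid_cl_def by (simp only: mem_Collect_eq)
  qed
  have tr: "a \<in> VH E \<C> {y}" if "a \<in> VH E \<C> {x}" "x \<in> VH E \<C> {y}" "y \<in> E" for a x y
  proof -
    have xE: "x \<in> E" using VH_subE[OF assms(2) that(2)] .
    have aE: "a \<in> E" and h1: "r ({x} \<union> {a}) = r {x}" using c[OF xE, of a] that(1) by simp_all
    have h2: "r ({y} \<union> {x}) = r {y}" using c[OF that(3), of x] that(2) by simp
    have "r ({y} \<union> {a}) = r {y}" using cl_trans[OF m xE that(3) aE h1 h2] .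
    then show ?thesis using c[OF that(3), of a] aE by simp
  qed
  show "forms_partition E (\<lambda>x. VH E \<C> {x})"
    unfolding forms_partition_def
  proof (intro ballI)
    fix x y assume x: "x \<in> E" and y: "y \<in> E"
    show "VH E \<C> {x} = VH E \<C> {y} \<or> VH E \<C> {x} \<inter> VH E \<C> {y} = {}"
    proof (cases "VH E \<C> {x} \<inter> VH E \<C> {y} = {}")
      case False
      then obtain a where a1: "a \<in> VH E \<C> {x}" and a2: "a \<in> VH E \<C> {y}" by blast
      have xy: "x \<in> VH E \<C> {y}" using tr[OF VH_sym[OF a1] a2 y] .
      have yx: "y \<in> VH E \<C> {x}" using tr[OF VH_sym[OF a2] a1 x] .
      have "VH E \<C> {x} = VH E \<C> {y}"
      proof (intro equalityI subsetI)
        fix b assume "b \<in> VH E \<C> {x}" then show "b \<in> VH E \<C> {y}" by (rule tr[OF _ xy y])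
      next
        fix b assume "b \<in> VH E \<C> {y}" then show "b \<in> VH E \<C> {x}" by (rule tr[OF _ yx x])
      qed
      then show ?thesis by (rule disjI1)
    qed (rule disjI2)
  qed
next
  assume p: "forms_partition E (\<lambda>x. VH E \<C> {x})"
  define f where "f = (\<lambda>x. VH E \<C> {x})"
  define r where "r = (\<lambda>X. card (f ` X))"
  have fin: "\<And>X. X \<subseteq> E \<Longrightarrow> finite X" using assms(1) finite_subset by blast
  have "matroid_rank E r"
    unfolding matroid_rank_def r_def
  proof (intro conjI allI impI)
    show "finite E" by fact
    fix X assume "X \<subseteq> E" then show "card (f ` X) \<le> card X" using fin card_image_le by blast
  next
    fix X Y assume "X \<subseteq> Y \<and> Y \<subseteq> E"
    then show "card (f ` X) \<le> card (f ` Y)" using fin by (meson card_mono finite_imageI image_mono)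
  next
    fix X Y assume h: "X \<subseteq> E \<and> Y \<subseteq> E"
    have fx: "finite (f ` X)" and fy: "finite (f ` Y)" using h fin by auto
    have "card (f ` (X \<inter> Y)) \<le> card (f ` X \<inter> f ` Y)"
      using fx by (intro card_mono) auto
    moreover have "card (f ` X \<union> f ` Y) + card (f ` X \<inter> f ` Y) = card (f ` X) + card (f ` Y)"
      using card_Un_Int[OF fx fy] by simp
    ultimately show "card (f ` (X \<union> Y)) + card (f ` (X \<inter> Y)) \<le> card (f ` X) + card (f ` Y)"
      by (simp add: image_Un)
  qed
  moreover have "VH E \<C> X = matroid_cl E r X" if X: "X \<subseteq> E" for X
  proof -
    have fX: "finite (f ` X)" using fin[OF X] by simp
    have eq: "r (X \<union> {a}) = r X \<longleftrightarrow> f a \<in> f ` X" for a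
    proof -
      have "r (X \<union> {a}) = card (insert (f a) (f ` X))" unfolding r_def by simp
      then show ?thesis using fX unfolding r_def by (simp add: card_insert_if)
    qed
    have "matroid_cl E r X = {a\<in>E. f a \<in> f ` X}"
      unfolding matroid_cl_def using eq by simp
    also have "\<dots> = VH E \<C> X"
    proof (intro equalityI subsetI)
      fix a assume "a \<in> {a\<in>E. f a \<in> f ` X}"
      then obtain x where x: "x \<in> X" and fa: "f a = f x" and aE: "a \<in> E" by auto
      have "a \<in> f a" unfolding f_def by (rule VH_refl[OF aE])
      then have "a \<in> VH E \<C> {x}" using fa unfolding f_def by simp
      then show "a \<in> VH E \<C> X" unfolding VH_union[of a E \<C> X] using x by (rule_tac bexI)
    next
      fix a assume "a \<in> VH E \<C> X"
      then obtain x where x: "x \<in> X" and ax: "a \<in> f x" unfolding VH_union[of a E \<C> X] f_def by blast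
      have aE: "a \<in> E" using VH_subE[OF assms(2)] ax unfolding f_def by blast
      have xE: "x \<in> E" using x X by blast
      have aa: "a \<in> f a" unfolding f_def by (rule VH_refl[OF aE])
      have "f a = f x \<or> f a \<inter> f x = {}" using p aE xE unfolding forms_partition_def f_def by blast
      then have "f a = f x" using aa ax by blast
      then show "a \<in> {a\<in>E. f a \<in> f ` X}" using aE x by auto
    qed
    finally show ?thesis by simp
  qed
  ultimately show "\<exists>r. matroid_rank E r \<and> (\<forall>X. X \<subseteq> E \<longrightarrow> VH E \<C> X = matroid_cl E r X)"
    by blast
qed

end
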